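(* Let $G$ be a finite simple graph with a perfect matching $M$ and let $\mathcal{C}$ be an optimal edge $2$-colouring of $G$; write $\mathrm{mcl}(u)$ for the colour of the edge of $M$ at vertex $u$. Let $F$ be a forest of rooted trees which is a subgraph of $G\setminus M$, with set of roots $R$ and set of leaves $L$, each tree equipped with a depth-first ordering, and let $\preceq$ be the induced partial order on $V(F)$ (see context). Suppose that for each $u\in R\cup L$, every edge of $F$ incident with $u$ has colour $\mathrm{mcl}(u)$. Then there exists a set $P=\{(u_i,v_i): i=1,\ldots,|L|\}$ of pairs of vertices of $F$ satisfying: (a) for $i\ne j$, $u_i\ne u_j$; (b) $u_i\prec v_i$ for all $1\le i\le |L|$; in particular the path $u_iFv_i$ exists; (c) $\mathrm{mcl}(u_i)=\mathrm{mcl}(v_i)$ for all $i$; (d) the path $u_iFv_i$ is monochromatic with all edges coloured $\mathrm{mcl}(u_i)$, for all $i$; (e) for every internal vertex $z$ of $u_iFv_i$, $\mathrm{mcl}(z)\ne\mathrm{mcl}(u_i)$, for all $i$; (f) for $i\ne j$ with $u_iv_i\in M$ and $u_jv_j\in M$, the paths $u_iFv_i$ and $u_jFv_j$ do not share an internal vertex.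
   Context: $G\setminus M$ is the spanning subgraph of $G$ with edge set $E(G)\setminus M$. An edge $2$-colouring assigns colours to edges (not necessarily properly) so that every vertex sees at most $2$ distinct colours on its incident edges; optimal means it uses the maximum number of colours. In a rooted tree, leaves are the non-root vertices with no children; $R$ and $L$ are the unions over the trees of $F$ of their roots and leaves. For a rooted tree $T$ with a depth-first indexing $\mathrm{dfs}_T$ (descendants receive larger indices than their ancestors), the order $\preceq_T$ is $u\preceq_T v$ iff $\mathrm{dfs}_T(u)\ge \mathrm{dfs}_T(v)$. The partial order $\preceq$ on $V(F)$ restricts to $\preceq_T$ on each component tree $T$, and vertices in different trees are incomparable; $u\prec v$ means $u\preceq v$, $u\ne v$. $xFy$ denotes the unique $x$–$y$ path in $F$ (when $x,y$ lie in the same tree); its internal vertices are those other than $x,y$. *)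

theory Defs
  imports Main
begin

definition simple_graph :: "'a set \<Rightarrow> 'a set set \<Rightarrow> bool" where
  "simple_graph V E \<longleftrightarrow> finite V \<and> E \<subseteq> {{x, y} | x y. x \<in> V \<and> y \<in> V \<and> x \<noteq> y}"

definition perfect_matching :: "'a set \<Rightarrow> 'a set set \<Rightarrow> 'a set set \<Rightarrow> bool" where
  "perfect_matching V E M \<longleftrightarrow> M \<subseteq> E \<and> (\<forall>v\<in>V. \<exists>!e. e \<in> M \<and> v \<in> e)"

text \<open>Edge 2-colouring: every vertex sees at most 2 distinct colours on incident edges.
  Colours are natural numbers (no loss of generality: a finite graph uses finitely many colours).\<close>
definition edge_2_colouring :: "'a set \<Rightarrow> 'a set set \<Rightarrow> ('a set \<Rightarrow> nat) \<Rightarrow> bool" where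
  "edge_2_colouring V E c \<longleftrightarrow> (\<forall>v\<in>V. card (c ` {e \<in> E. v \<in> e}) \<le> 2)"

definition optimal_edge_2_colouring :: "'a set \<Rightarrow> 'a set set \<Rightarrow> ('a set \<Rightarrow> nat) \<Rightarrow> bool" where
  "optimal_edge_2_colouring V E c \<longleftrightarrow> edge_2_colouring V E c \<and>
     (\<forall>c'. edge_2_colouring V E c' \<longrightarrow> card (c' ` E) \<le> card (c ` E))"

definition mcl :: "'a set set \<Rightarrow> ('a set \<Rightarrow> nat) \<Rightarrow> 'a \<Rightarrow> nat" where
  "mcl M c u = c (THE e. e \<in> M \<and> u \<in> e)"

text \<open>The forest F has vertex set VF; par v = None means v is a root, par v = Some p means
  p is the parent of v.\<close>
definition parent_rel :: "'a set \<Rightarrow> ('a \<Rightarrow> 'a option) \<Rightarrow> ('a \<times> 'a) set" where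
  "parent_rel VF par = {(v, p). v \<in> VF \<and> par v = Some p}"

definition rooted_forest :: "'a set \<Rightarrow> ('a \<Rightarrow> 'a option) \<Rightarrow> bool" where
  "rooted_forest VF par \<longleftrightarrow> finite VF \<and>
     (\<forall>v\<in>VF. \<forall>p. par v = Some p \<longrightarrow> p \<in> VF) \<and> acyclic (parent_rel VF par)"

definition forest_edges :: "'a set \<Rightarrow> ('a \<Rightarrow> 'a option) \<Rightarrow> 'a set set" where
  "forest_edges VF par = {{v, p} | v p. v \<in> VF \<and> par v = Some p}"

definition roots :: "'a set \<Rightarrow> ('a \<Rightarrow> 'a option) \<Rightarrow> 'a set" where
  "roots VF par = {v \<in> VF. par v = None}"

definition leaves :: "'a set \<Rightarrow> ('a \<Rightarrow> 'a option) \<Rightarrow> 'a set" where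
  "leaves VF par = {v \<in> VF. par v \<noteq> None \<and> \<not> (\<exists>w\<in>VF. par w = Some v)}"

definition anc :: "'a set \<Rightarrow> ('a \<Rightarrow> 'a option) \<Rightarrow> 'a \<Rightarrow> 'a \<Rightarrow> bool" where
  "anc VF par u v \<longleftrightarrow> (v, u) \<in> (parent_rel VF par)\<^sup>*"

definition same_tree :: "'a set \<Rightarrow> ('a \<Rightarrow> 'a option) \<Rightarrow> 'a \<Rightarrow> 'a \<Rightarrow> bool" where
  "same_tree VF par x y \<longleftrightarrow> (\<exists>r\<in>VF. anc VF par r x \<and> anc VF par r y)"

text \<open>A depth-first (preorder) indexing of each tree: injective on each tree, ancestors get
  smaller indices than their proper descendants, and the descendants of every vertex form a
  contiguous block of indices starting at that vertex.\<close>
definition dfs_indexing :: "'a set \<Rightarrow> ('a \<Rightarrow> 'a option) \<Rightarrow> ('a \<Rightarrow> nat) \<Rightarrow> bool" where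
  "dfs_indexing VF par dfs \<longleftrightarrow>
     (\<forall>x\<in>VF. \<forall>y\<in>VF. same_tree VF par x y \<and> dfs x = dfs y \<longrightarrow> x = y) \<and>
     (\<forall>u\<in>VF. \<forall>v\<in>VF. anc VF par u v \<and> u \<noteq> v \<longrightarrow> dfs u < dfs v) \<and>
     (\<forall>u\<in>VF. \<forall>v\<in>VF. \<forall>w\<in>VF. anc VF par u v \<and> same_tree VF par u w \<and>
         dfs u < dfs w \<and> dfs w < dfs v \<longrightarrow> anc VF par u w)"

definition forest_le :: "'a set \<Rightarrow> ('a \<Rightarrow> 'a option) \<Rightarrow> ('a \<Rightarrow> nat) \<Rightarrow> 'a \<Rightarrow> 'a \<Rightarrow> bool" where
  "forest_le VF par dfs u v \<longleftrightarrow> u \<in> VF \<and> v \<in> VF \<and> same_tree VF par u v \<and> dfs u \<ge> dfs v"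

definition forest_less :: "'a set \<Rightarrow> ('a \<Rightarrow> 'a option) \<Rightarrow> ('a \<Rightarrow> nat) \<Rightarrow> 'a \<Rightarrow> 'a \<Rightarrow> bool" where
  "forest_less VF par dfs u v \<longleftrightarrow> forest_le VF par dfs u v \<and> u \<noteq> v"

text \<open>xs is a path from x to y in F (list of distinct vertices, consecutive ones adjacent in F).
  In a forest such a path is unique when it exists.\<close>
definition forest_path :: "'a set \<Rightarrow> ('a \<Rightarrow> 'a option) \<Rightarrow> 'a list \<Rightarrow> 'a \<Rightarrow> 'a \<Rightarrow> bool" where
  "forest_path VF par xs x y \<longleftrightarrow> xs \<noteq> [] \<and> hd xs = x \<and> last xs = y \<and> distinct xs \<and>
     (\<forall>i. Suc i < length xs \<longrightarrow> {xs ! i, xs ! Suc i} \<in> forest_edges VF par)"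

definition path_edges :: "'a list \<Rightarrow> 'a set set" where
  "path_edges xs = {{xs ! i, xs ! Suc i} | i. Suc i < length xs}"

definition path_internal :: "'a list \<Rightarrow> 'a set" where
  "path_internal xs = set xs - {hd xs, last xs}"

end

theory Submission imports Defs begin

lemma path_edges_img: "path_edges xs = (\<lambda>i. {xs!i, xs!Suc i}) ` {..<length xs - 1}"
  unfolding path_edges_def by (auto simp: less_diff_conv)

lemma path_edges_Cons:
  "path_edges (x # xs) = (if xs = [] then {} else insert {x, hd xs} (path_edges xs))"
proof (cases xs)
  case Nil then show ?thesis by (simp add: path_edges_def)
next
  case (Cons y ys)
  have "path_edges (x # xs) = (\<lambda>i. {(x#y#ys)!i, (x#y#ys)!Suc i}) ` {..<Suc (length ys)}"
    by (simp add: path_edges_img Cons)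
  also have "\<dots> = insert {x, y} ((\<lambda>i. {(y#ys)!i, (y#ys)!Suc i}) ` {..<length ys})"
    by (simp add: lessThan_Suc_eq_insert_0 image_image)
  also have "\<dots> = insert {x, hd xs} (path_edges xs)" by (simp add: path_edges_img Cons)
  finally show ?thesis using Cons by simp
qed

lemma path_edges_Nil[simp]: "path_edges [] = {}" by (simp add: path_edges_def)
lemma path_edges_single[simp]: "path_edges [x] = {}" by (simp add: path_edges_def)
lemma path_edges_CC[simp]: "path_edges (x # y # ys) = insert {x, y} (path_edges (y # ys))"
  by (simp add: path_edges_Cons)

lemma path_edges_append:
  "xs \<noteq> [] \<Longrightarrow> ys \<noteq> [] \<Longrightarrow>
   path_edges (xs @ ys) = path_edges xs \<union> path_edges ys \<union> {{last xs, hd ys}}"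
proof (induction xs)
  case Nil then show ?case by simp
next
  case (Cons x xs)
  show ?case
  proof (cases xs)
    case Nil
    with Cons.prems show ?thesis by (cases ys) auto
  next
    fix y zs assume Cons2: "xs = y # zs"
    have "path_edges ((x # xs) @ ys) = insert {x, y} (path_edges (xs @ ys))"
      using Cons2 by simp
    also have "\<dots> = insert {x,y} (path_edges xs \<union> path_edges ys \<union> {{last xs, hd ys}})"
      using Cons.IH Cons2 Cons.prems by simp
    finally show ?thesis using Cons2 by auto
  qed
qed

lemma path_edges_rev: "path_edges (rev xs) = path_edges xs"
proof (induction xs)
  case Nil then show ?case by simp
next
  case (Cons x xs)
  show ?case
  proof (cases xs)
    case Nil then show ?thesis by simp
  next
    case (Cons y ys)
    have "path_edges (rev (x # xs)) = path_edges (rev xs @ [x])" by simp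
    also have "\<dots> = path_edges (rev xs) \<union> {{last (rev xs), x}}"
      using path_edges_append[of "rev xs" "[x]"] Cons by simp
    also have "\<dots> = path_edges (x # xs)" 
    proof -
      have "last (rev xs) = y" using Cons by simp
      moreover have "{y, x} = {x, y}" by blast
      ultimately show ?thesis using Cons.IH Cons by simp
    qed
    finally show ?thesis .
  qed
qed

lemma path_internal_edge:
  assumes "z \<in> path_internal xs" shows "\<exists>e\<in>path_edges xs. z \<in> e"
proof -
  have z: "z \<in> set xs" "z \<noteq> hd xs" using assms by (auto simp: path_internal_def)
  then obtain ys zs where xs: "xs = ys @ z # zs" by (meson split_list)
  with z have "ys \<noteq> []" by auto
  then have "{last ys, z} \<in> path_edges xs" using xs path_edges_append[of ys "z # zs"] by auto
  then show ?thesis by auto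
qed

fun ch :: "('a \<times> 'a) set \<Rightarrow> 'a list \<Rightarrow> bool" where
  "ch r (x # y # zs) = ((x, y) \<in> r \<and> ch r (y # zs))"
| "ch r _ = True"

lemma ch_trancl: "ch r (x # xs) \<Longrightarrow> z \<in> set xs \<Longrightarrow> (x, z) \<in> r\<^sup>+"
proof (induction xs arbitrary: x)
  case Nil then show ?case by simp
next
  case (Cons y ys)
  then have "(x, y) \<in> r" "ch r (y # ys)" by auto
  with Cons show ?case by (auto intro: trancl_into_trancl2)
qed

lemma ch_distinct: "ch r xs \<Longrightarrow> acyclic r \<Longrightarrow> distinct xs"
proof (induction xs)
  case Nil then show ?case by simp
next
  case (Cons x xs)
  have "ch r xs" using Cons.prems by (cases xs) auto
  moreover have "x \<notin> set xs" using ch_trancl[OF Cons.prems(1)] Cons.prems(2)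
    by (auto simp: acyclic_def)
  ultimately show ?case using Cons by simp
qed

lemma ch_edges: "ch r xs \<Longrightarrow> (\<And>a b. (a, b) \<in> r \<Longrightarrow> {a, b} \<in> S) \<Longrightarrow> path_edges xs \<subseteq> S"
  by (induction r xs rule: ch.induct) auto

lemma ch_mono: "ch r xs \<Longrightarrow> r \<subseteq> s \<Longrightarrow> ch s xs"
  by (induction r xs rule: ch.induct) auto

lemma rtrancl_ch:
  assumes "(p, a) \<in> r\<^sup>*"
  shows "\<exists>ys. ys \<noteq> [] \<and> hd ys = p \<and> last ys = a \<and> ch r ys \<and>
              (\<forall>z\<in>set ys. (p, z) \<in> r\<^sup>* \<and> (z, a) \<in> r\<^sup>*)"
  using assms
proof (induction rule: converse_rtrancl_induct)
  case base
  show ?case by (intro exI[of _ "[a]"]) auto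
next
  case (step y z)
  then obtain ys where ys: "ys \<noteq> []" "hd ys = z" "last ys = a" "ch r ys"
    "\<forall>w\<in>set ys. (z, w) \<in> r\<^sup>* \<and> (w, a) \<in> r\<^sup>*" by blast
  have "ch r (y # ys)" using ys step.hyps by (cases ys) auto
  moreover have "\<forall>w\<in>set (y # ys). (y, w) \<in> r\<^sup>* \<and> (w, a) \<in> r\<^sup>*"
    using ys step.hyps by (auto intro: converse_rtrancl_into_rtrancl)
  moreover have "last (y # ys) = a" "hd (y # ys) = y" using ys by auto
  ultimately show ?case by blast
qed

lemma combine_paths:
  assumes xs: "xs \<noteq> []" "distinct xs" and ys: "ys \<noteq> []" "distinct ys"
    and l: "last xs = last ys"
  shows "\<exists>zs. zs \<noteq> [] \<and> hd zs = hd xs \<and> last zs = hd ys \<and> distinct zs \<and>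
           set zs \<subseteq> set xs \<union> set ys \<and> path_edges zs \<subseteq> path_edges xs \<union> path_edges ys"
proof -
  have "\<exists>w\<in>set xs. w \<in> set ys" using xs ys l by (metis last_in_set)
  then obtain xs1 w xs2 where X: "xs = xs1 @ w # xs2" "w \<in> set ys" "\<forall>y\<in>set xs1. y \<notin> set ys"
    using split_list_first_prop[of xs "\<lambda>w. w \<in> set ys"] by blast
  obtain ys1 ys2 where Y: "ys = ys1 @ w # ys2" using X(2) by (meson split_list)
  define zs where "zs = xs1 @ w # rev ys1"
  have d1: "distinct xs1" "w \<notin> set xs1" using xs(2) X(1) by auto
  have d2: "distinct ys1" "w \<notin> set ys1" using ys(2) Y by auto
  have d3: "set xs1 \<inter> set ys1 = {}" using X(3) Y by auto
  have D: "distinct zs" unfolding zs_def using d1 d2 d3 by auto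
  have S: "set zs \<subseteq> set xs \<union> set ys" using X(1) Y by (auto simp: zs_def)
  have H: "hd zs = hd xs" using X(1) by (cases xs1) (auto simp: zs_def)
  have L: "last zs = hd ys" using Y by (cases ys1) (auto simp: zs_def)
  have P: "path_edges zs \<subseteq> path_edges xs \<union> path_edges ys"
  proof -
    have A: "path_edges (xs1 @ [w]) \<subseteq> path_edges xs"
    proof (cases "xs1 = []")
      case False
      then show ?thesis using X path_edges_append[of xs1 "[w]"] path_edges_append[of xs1 "w # xs2"] by auto
    qed simp
    have B: "path_edges (ys1 @ [w]) \<subseteq> path_edges ys"
    proof (cases "ys1 = []")
      case False
      then show ?thesis using Y path_edges_append[of ys1 "[w]"] path_edges_append[of ys1 "w # ys2"] by auto
    qed simp
    have "path_edges zs \<subseteq> path_edges (xs1 @ [w]) \<union> path_edges (ys1 @ [w])"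
    proof (cases "ys1 = []")
      case True then show ?thesis by (simp add: zs_def)
    next
      case False
      have "zs = (xs1 @ [w]) @ rev ys1" by (simp add: zs_def)
      then have "path_edges zs = path_edges (xs1 @ [w]) \<union> path_edges (rev ys1) \<union> {{w, last ys1}}"
        using path_edges_append[of "xs1 @ [w]" "rev ys1"] False by (simp add: hd_rev)
      moreover have "path_edges (ys1 @ [w]) = path_edges ys1 \<union> {{last ys1, w}}"
        using path_edges_append[of ys1 "[w]"] False by simp
      moreover have "{w, last ys1} = {last ys1, w}" by blast
      ultimately show ?thesis by (simp add: path_edges_rev)
    qed
    then show ?thesis using A B by blast
  qed
  have N: "zs \<noteq> []" by (simp add: zs_def)
  show ?thesis by (rule exI[of _ zs]) (intro conjI N H L D S P)
qed

lemma functional_end_unique: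
  assumes fn: "\<And>x y z. (x, y) \<in> r \<Longrightarrow> (x, z) \<in> r \<Longrightarrow> y = z"
    and "(z, a) \<in> r\<^sup>*" "a \<notin> Domain r" "(z, b) \<in> r\<^sup>*" "b \<notin> Domain r"
  shows "a = b"
  using assms(2-5)
proof (induction arbitrary: b rule: converse_rtrancl_induct)
  case base
  from \<open>(a, b) \<in> r\<^sup>*\<close> show ?case
  proof (cases rule: converse_rtranclE)
    case (step w) then show ?thesis using \<open>a \<notin> Domain r\<close> by auto
  qed simp
next
  case (step y z)
  from \<open>(y, b) \<in> r\<^sup>*\<close> show ?case
  proof (cases rule: converse_rtranclE)
    case base then show ?thesis using step.hyps(1) step.prems by auto
  next
    case (step w)
    then have "w = z" using fn \<open>(y, z) \<in> r\<close> by blast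
    then show ?thesis using step.IH step \<open>b \<notin> Domain r\<close> \<open>a \<notin> Domain r\<close> by blast
  qed
qed

lemma injective_chain:
  assumes inj: "\<And>x y z. (x, z) \<in> r \<Longrightarrow> (y, z) \<in> r \<Longrightarrow> x = y"
    and "(l1, u) \<in> r\<^sup>*" "(l2, u) \<in> r\<^sup>*" "l1 \<notin> Range r" "l2 \<notin> Range r"
  shows "l1 = l2"
  using assms(2-5)
proof (induction arbitrary: l2 rule: rtrancl_induct)
  case base
  from \<open>(l2, l1) \<in> r\<^sup>*\<close> show ?case
  proof (cases rule: rtranclE)
    case (step w) then show ?thesis using \<open>l1 \<notin> Range r\<close> by blast
  qed simp
next
  case (step y z)
  from \<open>(l2, z) \<in> r\<^sup>*\<close> show ?case
  proof (cases rule: rtranclE)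
    case base then show ?thesis using step.hyps(2) \<open>l2 \<notin> Range r\<close> by blast
  next
    case (step w)
    then have "w = y" using inj \<open>(y, z) \<in> r\<close> by blast
    then show ?thesis using step.IH step \<open>l2 \<notin> Range r\<close> \<open>l1 \<notin> Range r\<close> by blast
  qed
qed

lemma exists_end:
  assumes "wf (r\<inverse>)" shows "\<exists>a. (z, a) \<in> r\<^sup>* \<and> a \<notin> Domain r"
  using assms
proof (induction z rule: wf_induct_rule)
  case (less z)
  show ?case
  proof (cases "z \<in> Domain r")
    case False then show ?thesis by auto
  next
    case True
    then obtain y where "(z, y) \<in> r" by auto
    with less obtain a where "(y, a) \<in> r\<^sup>*" "a \<notin> Domain r" by blast
    then show ?thesis using \<open>(z, y) \<in> r\<close> by (meson converse_rtrancl_into_rtrancl)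
  qed
qed


lemma card3_contra:
  assumes "finite S" "card S \<le> 2" "a \<in> S" "b \<in> S" "d \<in> S" "a \<noteq> b" "a \<noteq> d" "b \<noteq> d"
  shows False
proof -
  have "{a, b, d} \<subseteq> S" using assms by auto
  then have "card {a, b, d} \<le> card S" using assms(1) by (rule card_mono[rotated])
  moreover have "card {a, b, d} = 3" using assms(6-8) by auto
  ultimately show False using assms(2) by linarith
qed

locale L3 =
  fixes V :: "'a set" and E M :: "'a set set" and c :: "'a set \<Rightarrow> nat"
    and VF :: "'a set" and par :: "'a \<Rightarrow> 'a option" and dfs :: "'a \<Rightarrow> nat"
  assumes G: "simple_graph V E"
    and PM: "perfect_matching V E M"
    and C2: "edge_2_colouring V E c"
    and F: "rooted_forest VF par"
    and FV: "VF \<subseteq> V" and FE: "forest_edges VF par \<subseteq> E - M"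
    and D: "dfs_indexing VF par dfs"
    and RL: "\<forall>u \<in> roots VF par \<union> leaves VF par. \<forall>e \<in> forest_edges VF par.
               u \<in> e \<longrightarrow> c e = mcl M c u"
begin

abbreviation m where "m \<equiv> mcl M c"
abbreviation PR where "PR \<equiv> parent_rel VF par"

lemma fin_E: "finite E"
proof -
  have "E \<subseteq> Pow V" using G unfolding simple_graph_def by auto
  moreover have "finite V" using G unfolding simple_graph_def by auto
  ultimately show ?thesis by (meson finite_Pow_iff finite_subset)
qed

lemma E_V: "e \<in> E \<Longrightarrow> z \<in> e \<Longrightarrow> z \<in> V"
  using G unfolding simple_graph_def by auto

lemma PR_VF: "(w, p) \<in> PR \<Longrightarrow> w \<in> VF \<and> p \<in> VF \<and> par w = Some p"
  using F unfolding parent_rel_def rooted_forest_def by auto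

lemma PR_fin: "finite PR"
proof -
  have "PR \<subseteq> VF \<times> VF" using PR_VF by auto
  moreover have "finite VF" using F unfolding rooted_forest_def by auto
  ultimately show ?thesis by (meson finite_SigmaI finite_subset)
qed

lemma PR_acyc: "acyclic PR" using F unfolding rooted_forest_def by auto

lemma PR_edge: "(w, p) \<in> PR \<Longrightarrow> {w, p} \<in> forest_edges VF par"
  unfolding parent_rel_def forest_edges_def by auto

lemma FE_E: "e \<in> forest_edges VF par \<Longrightarrow> e \<in> E" using FE by auto

lemma mcl_edge: assumes "z \<in> V" shows "\<exists>e. e \<in> E \<and> z \<in> e \<and> c e = m z"
proof -
  have ex: "\<exists>!e. e \<in> M \<and> z \<in> e" using PM assms unfolding perfect_matching_def by auto
  then have "(THE e. e \<in> M \<and> z \<in> e) \<in> M \<and> z \<in> (THE e. e \<in> M \<and> z \<in> e)" by (rule theI')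
  moreover have "M \<subseteq> E" using PM unfolding perfect_matching_def by auto
  ultimately show ?thesis unfolding mcl_def by blast
qed

lemma colour3:
  assumes "z \<in> V" "e1 \<in> E" "e2 \<in> E" "z \<in> e1" "z \<in> e2" "c e1 \<noteq> m z" "c e2 \<noteq> m z"
  shows "c e1 = c e2"
proof (rule ccontr)
  assume ne: "c e1 \<noteq> c e2"
  obtain e0 where e0: "e0 \<in> E" "z \<in> e0" "c e0 = m z" using mcl_edge[OF assms(1)] by blast
  let ?S = "c ` {e \<in> E. z \<in> e}"
  have "finite ?S" using fin_E by auto
  moreover have "card ?S \<le> 2" using C2 assms(1) unfolding edge_2_colouring_def by auto
  moreover have "c e0 \<in> ?S" using e0(1,2) by blast
  moreover have "c e1 \<in> ?S" "c e2 \<in> ?S" using assms by auto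
  ultimately show False using card3_contra[of ?S "c e0" "c e1" "c e2"] ne assms(6,7) e0(3) by metis
qed

definition col where "col w = c {w, the (par w)}"
definition T0 where "T0 = {x \<in> VF. par x \<noteq> None \<and> m x = col x}"
definition Rc where "Rc \<alpha> = {(w, p). w \<in> VF \<and> par w = Some p \<and> c {w, p} = \<alpha>}"
definition Tr where "Tr \<alpha> = {(w, p). (w, p) \<in> Rc \<alpha> \<and> m w \<noteq> \<alpha>}"
definition topx where
  "topx x = (THE a. (the (par x), a) \<in> (Tr (col x))\<^sup>* \<and> a \<notin> Domain (Tr (col x)))"
definition grp where "grp a = {y \<in> T0. topx y = a \<and> m a \<noteq> col y}"
definition vmin where "vmin a = arg_min_on dfs (grp a)"
definition partner where
  "partner x = (if m (topx x) = col x then topx x else vmin (topx x))"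
definition U where "U = {x \<in> T0. partner x \<noteq> x}"
definition Ch where "Ch = {(x, topx x) | x. x \<in> T0 \<and> partner x = x}"

lemma Rc_PR: "Rc \<alpha> \<subseteq> PR" unfolding Rc_def parent_rel_def by auto
lemma Tr_Rc: "Tr \<alpha> \<subseteq> Rc \<alpha>" unfolding Tr_def by auto
lemma Tr_PR: "Tr \<alpha> \<subseteq> PR" using Rc_PR Tr_Rc by blast

lemma Tr_fun: "(w, p) \<in> Tr \<alpha> \<Longrightarrow> (w, q) \<in> Tr \<alpha> \<Longrightarrow> p = q"
  unfolding Tr_def Rc_def by auto

lemma Rc_edge: "(w, p) \<in> Rc \<alpha> \<Longrightarrow> {w, p} \<in> {e \<in> forest_edges VF par. c e = \<alpha>}"
  using PR_edge Rc_PR unfolding Rc_def by blast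

lemma wf_Tr: "wf ((Tr \<alpha>)\<inverse>)"
  by (rule finite_acyclic_wf_converse) (auto intro: finite_subset[OF Tr_PR PR_fin] acyclic_subset[OF PR_acyc Tr_PR])

lemma PR_rt_VF: "(x, a) \<in> PR\<^sup>+ \<Longrightarrow> a \<in> VF"
  by (induction rule: trancl_induct) (auto dest: PR_VF)

lemma T0_par: assumes "x \<in> T0"
  obtains p where "par x = Some p" "p \<in> VF" "x \<in> VF" "(x, p) \<in> Rc (col x)" "(x, p) \<in> PR"
    "m x = col x"
proof -
  obtain p where p: "par x = Some p" "x \<in> VF" "m x = col x" using assms unfolding T0_def by auto
  then have "(x, p) \<in> PR" unfolding parent_rel_def by auto
  moreover have "(x, p) \<in> Rc (col x)" using p unfolding Rc_def col_def by auto
  ultimately show ?thesis using that p PR_VF by blast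
qed

lemma top_props:
  assumes "x \<in> T0"
  shows "(the (par x), topx x) \<in> (Tr (col x))\<^sup>*" "topx x \<notin> Domain (Tr (col x))"
proof -
  let ?P = "\<lambda>a. (the (par x), a) \<in> (Tr (col x))\<^sup>* \<and> a \<notin> Domain (Tr (col x))"
  have "\<exists>a. ?P a" using exists_end[OF wf_Tr] by blast
  moreover have "\<And>a b. ?P a \<Longrightarrow> ?P b \<Longrightarrow> a = b"
    using functional_end_unique[of "Tr (col x)"] Tr_fun by blast
  ultimately have "\<exists>!a. ?P a" by blast
  then have "?P (topx x)" unfolding topx_def by (rule theI')
  then show "(the (par x), topx x) \<in> (Tr (col x))\<^sup>*" "topx x \<notin> Domain (Tr (col x))" by auto
qed

lemma top_anc: assumes "x \<in> T0" shows "(x, topx x) \<in> PR\<^sup>+" "topx x \<noteq> x" "topx x \<in> VF"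
proof -
  obtain p where p: "par x = Some p" "(x, p) \<in> PR" using assms by (rule T0_par)
  have "(p, topx x) \<in> (Tr (col x))\<^sup>*" using top_props(1)[OF assms] p by simp
  then have "(p, topx x) \<in> PR\<^sup>*" using rtrancl_mono[OF Tr_PR] by blast
  then show 1: "(x, topx x) \<in> PR\<^sup>+" using p by auto
  then show "topx x \<noteq> x" using PR_acyc unfolding acyclic_def by auto
  show "topx x \<in> VF" using PR_rt_VF[OF 1] .
qed

lemma child_top:
  assumes "x \<in> T0" shows "\<exists>w \<in> VF. par w = Some (topx x) \<and> c {w, topx x} = col x"
proof -
  obtain p where p: "par x = Some p" "(x, p) \<in> Rc (col x)" "x \<in> VF" using assms by (rule T0_par)
  have "(p, topx x) \<in> (Tr (col x))\<^sup>*" using top_props(1)[OF assms] p by simp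
  then show ?thesis
  proof (cases rule: rtranclE)
    case base then show ?thesis using p unfolding Rc_def by auto
  next
    case (step y) then show ?thesis unfolding Tr_def Rc_def by auto
  qed
qed

lemma top_T0: assumes "x \<in> T0" "m (topx x) \<noteq> col x" shows "topx x \<in> T0"
proof -
  let ?a = "topx x"
  obtain w where w: "w \<in> VF" "par w = Some ?a" "c {w, ?a} = col x" using child_top[OF assms(1)] by blast
  have aV: "?a \<in> VF" using top_anc[OF assms(1)] by simp
  have we: "{w, ?a} \<in> forest_edges VF par" using w unfolding forest_edges_def by auto
  have "par ?a \<noteq> None"
  proof
    assume "par ?a = None"
    then have "?a \<in> roots VF par" using aV unfolding roots_def by auto
    then have "c {w, ?a} = m ?a" using RL we by auto
    then show False using w assms(2) by simp
  qed
  then obtain q where q: "par ?a = Some q" by auto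
  have qe: "{?a, q} \<in> forest_edges VF par" using q aV unfolding forest_edges_def by auto
  have "c {?a, q} \<noteq> col x"
  proof
    assume "c {?a, q} = col x"
    then have "(?a, q) \<in> Tr (col x)" using q aV assms(2) unfolding Tr_def Rc_def by auto
    then show False using top_props(2)[OF assms(1)] by auto
  qed
  moreover have "c {?a, q} = m ?a"
  proof (rule ccontr)
    assume "c {?a, q} \<noteq> m ?a"
    then have "c {?a, q} = c {w, ?a}"
      using colour3[of ?a "{?a, q}" "{w, ?a}"] FE_E[OF qe] FE_E[OF we] FV aV w(3) assms(2) by auto
    then show False using calculation w(3) by simp
  qed
  ultimately show ?thesis using aV q unfolding T0_def col_def by auto
qed

lemma leaves_T0: "leaves VF par \<subseteq> T0"
proof
  fix l assume l: "l \<in> leaves VF par"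
  then obtain p where p: "par l = Some p" "l \<in> VF" unfolding leaves_def by auto
  then have "{l, p} \<in> forest_edges VF par" unfolding forest_edges_def by auto
  then have "c {l, p} = m l" using RL l by auto
  then show "l \<in> T0" using p unfolding T0_def col_def by auto
qed

lemma leaf_not_top: "l \<in> leaves VF par \<Longrightarrow> x \<in> T0 \<Longrightarrow> topx x \<noteq> l"
  using child_top[of x] unfolding leaves_def by auto

lemma grp_col: assumes "x \<in> grp a" "y \<in> grp a" shows "col x = col y"
proof -
  have x: "x \<in> T0" "topx x = a" "m a \<noteq> col x" and y: "y \<in> T0" "topx y = a" "m a \<noteq> col y"
    using assms unfolding grp_def by auto
  obtain w1 where w1: "w1 \<in> VF" "par w1 = Some a" "c {w1, a} = col x" using child_top[OF x(1)] x by auto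
  obtain w2 where w2: "w2 \<in> VF" "par w2 = Some a" "c {w2, a} = col y" using child_top[OF y(1)] y by auto
  have e1: "{w1, a} \<in> E" and e2: "{w2, a} \<in> E"
    using w1 w2 FE_E unfolding forest_edges_def by blast+
  have "a \<in> V" using top_anc(3)[OF x(1)] x FV by auto
  then show ?thesis using colour3[OF _ e1 e2] w1 w2 x y by auto
qed

lemma grp_fin: "finite (grp a)"
proof -
  have "grp a \<subseteq> VF" unfolding grp_def T0_def by auto
  then show ?thesis using F unfolding rooted_forest_def by (auto intro: finite_subset)
qed

lemma vmin_props: assumes "x \<in> grp a" shows "vmin a \<in> grp a" "dfs (vmin a) \<le> dfs x"
  using arg_min_if_finite(1)[OF grp_fin, of a dfs] arg_min_least[OF grp_fin, of a x dfs] assms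
  unfolding vmin_def by auto

lemma Ch_T0: assumes "(x, y) \<in> Ch" shows "x \<in> T0" "y \<in> T0" "y = topx x" "(x, y) \<in> PR\<^sup>+"
proof -
  have x: "x \<in> T0" "partner x = x" "y = topx x" using assms unfolding Ch_def by auto
  then have "m (topx x) \<noteq> col x" using top_anc(2)[OF x(1)] unfolding partner_def by auto
  then show "x \<in> T0" "y \<in> T0" "y = topx x" using top_T0 x by auto
  show "(x, y) \<in> PR\<^sup>+" using top_anc(1)[OF x(1)] x by simp
qed

lemma Ch_inj: assumes "(x, z) \<in> Ch" "(y, z) \<in> Ch" shows "x = y"
proof -
  have x: "x \<in> T0" "partner x = x" "z = topx x" and y: "y \<in> T0" "partner y = y" "z = topx y"
    using assms unfolding Ch_def by auto
  have "m z \<noteq> col x" using top_anc(2)[OF x(1)] x unfolding partner_def by auto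
  then have "vmin z = x" using x unfolding partner_def by auto
  moreover have "m z \<noteq> col y" using top_anc(2)[OF y(1)] y unfolding partner_def by auto
  then have "vmin z = y" using y unfolding partner_def by auto
  ultimately show ?thesis by simp
qed

lemma wf_Ch: "wf (Ch\<inverse>)"
proof (rule finite_acyclic_wf_converse)
  have "Ch \<subseteq> PR\<^sup>+" using Ch_T0 by auto
  moreover have "finite (PR\<^sup>+)" using PR_fin by (rule finite_trancl[THEN iffD2])
  ultimately show "finite Ch" by (rule finite_subset)
  have "acyclic (PR\<^sup>+)" using PR_acyc unfolding acyclic_def by simp
  then show "acyclic Ch" using \<open>Ch \<subseteq> PR\<^sup>+\<close> by (rule acyclic_subset)
qed

lemma Ch_rt_T0: "(x, y) \<in> Ch\<^sup>* \<Longrightarrow> x \<in> T0 \<Longrightarrow> y \<in> T0"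
  by (induction rule: rtrancl_induct) (auto dest: Ch_T0)

lemma U_fin: "finite U"
proof -
  have "U \<subseteq> VF" unfolding U_def T0_def by auto
  then show ?thesis using F unfolding rooted_forest_def by (auto intro: finite_subset)
qed

lemma card_leaves: "card (leaves VF par) \<le> card U"
proof -
  define f where "f l = (SOME u. (l, u) \<in> Ch\<^sup>* \<and> u \<notin> Domain Ch)" for l
  have f: "(l, f l) \<in> Ch\<^sup>* \<and> f l \<notin> Domain Ch" for l
    unfolding f_def by (rule someI_ex) (rule exists_end[OF wf_Ch])
  have "f ` leaves VF par \<subseteq> U"
  proof
    fix u assume "u \<in> f ` leaves VF par"
    then obtain l where l: "l \<in> leaves VF par" "u = f l" by auto
    then have "u \<in> T0" using Ch_rt_T0 f leaves_T0 by blast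
    moreover have "partner u \<noteq> u" using f l unfolding Ch_def using \<open>u \<in> T0\<close> by blast
    ultimately show "u \<in> U" unfolding U_def by auto
  qed
  moreover have "inj_on f (leaves VF par)"
  proof (rule inj_onI)
    fix l1 l2 assume l: "l1 \<in> leaves VF par" "l2 \<in> leaves VF par" "f l1 = f l2"
    have nr: "l \<notin> Range Ch" if "l \<in> leaves VF par" for l
      using that leaf_not_top Ch_T0 by fastforce
    show "l1 = l2"
      using injective_chain[of Ch l1 "f l1" l2] Ch_inj f[of l1] f[of l2] l nr by metis
  qed
  ultimately show ?thesis using U_fin by (meson card_inj_on_le)
qed


lemma uplist:
  assumes "y \<in> T0"
  shows "\<exists>xs. xs \<noteq> [] \<and> hd xs = y \<and> last xs = topx y \<and> distinct xs \<and>
           path_edges xs \<subseteq> {e \<in> forest_edges VF par. c e = col y} \<and>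
           (\<forall>z \<in> set xs - {y}. (z, topx y) \<in> (Tr (col y))\<^sup>* \<and> (z = topx y \<or> m z \<noteq> col y))"
proof -
  obtain p where p: "par y = Some p" "(y, p) \<in> Rc (col y)" using assms by (rule T0_par)
  have "(p, topx y) \<in> (Tr (col y))\<^sup>*" using top_props(1)[OF assms] p by simp
  from rtrancl_ch[OF this] obtain ys where ys: "ys \<noteq> []" "hd ys = p" "last ys = topx y" "ch (Tr (col y)) ys"
    "\<forall>z\<in>set ys. (p, z) \<in> (Tr (col y))\<^sup>* \<and> (z, topx y) \<in> (Tr (col y))\<^sup>*"
    by blast
  have chx: "ch (Rc (col y)) (y # ys)"
    using ys ch_mono[OF ys(4) Tr_Rc] p by (cases ys) auto
  have "distinct (y # ys)"
    using ch_distinct[OF chx acyclic_subset[OF PR_acyc Rc_PR]] .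
  moreover have "path_edges (y # ys) \<subseteq> {e \<in> forest_edges VF par. c e = col y}"
    using ch_edges[OF chx] Rc_edge by blast
  moreover have "\<forall>z \<in> set (y # ys) - {y}. (z, topx y) \<in> (Tr (col y))\<^sup>* \<and> (z = topx y \<or> m z \<noteq> col y)"
  proof
    fix z assume "z \<in> set (y # ys) - {y}"
    then have z: "(z, topx y) \<in> (Tr (col y))\<^sup>*" using ys by auto
    moreover have "z = topx y \<or> m z \<noteq> col y"
      using z by (cases rule: converse_rtranclE) (auto simp: Tr_def)
    ultimately show "(z, topx y) \<in> (Tr (col y))\<^sup>* \<and> (z = topx y \<or> m z \<noteq> col y)" by blast
  qed
  moreover have "last (y # ys) = topx y" "hd (y # ys) = y" "y # ys \<noteq> []" using ys by auto
  ultimately show ?thesis by blast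
qed

lemma fpath: "forest_path VF par xs x y \<longleftrightarrow> xs \<noteq> [] \<and> hd xs = x \<and> last xs = y \<and> distinct xs \<and>
   path_edges xs \<subseteq> forest_edges VF par"
  unfolding forest_path_def path_edges_def by blast

lemma anc_PR: "(x, a) \<in> PR\<^sup>* \<Longrightarrow> anc VF par a x" unfolding anc_def by simp

lemma dfs_inj: "x \<in> VF \<Longrightarrow> y \<in> VF \<Longrightarrow> same_tree VF par x y \<Longrightarrow> dfs x = dfs y \<Longrightarrow> x = y"
  using D unfolding dfs_indexing_def by blast

lemma dfs_anc: "u \<in> VF \<Longrightarrow> v \<in> VF \<Longrightarrow> anc VF par u v \<Longrightarrow> u \<noteq> v \<Longrightarrow> dfs u < dfs v"
  using D unfolding dfs_indexing_def by blast

lemma K6: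
  assumes xU: "x \<in> U"
  shows "\<exists>xs. forest_less VF par dfs x (partner x) \<and> m (partner x) = m x \<and>
    forest_path VF par xs x (partner x) \<and> (\<forall>e\<in>path_edges xs. c e = m x) \<and>
    (\<forall>z\<in>path_internal xs. m z \<noteq> m x \<and> (z, topx x) \<in> (Tr (col x))\<^sup>* \<and>
        (\<exists>e\<in>forest_edges VF par. z \<in> e \<and> c e = m x))"
proof -
  have x: "x \<in> T0" "partner x \<noteq> x" using xU unfolding U_def by auto
  let ?a = "topx x" and ?\<alpha> = "col x"
  have xV: "x \<in> VF" and mx: "m x = col x" using x(1) unfolding T0_def by auto
  have aV: "?a \<in> VF" and ane: "?a \<noteq> x" and xa: "(x, ?a) \<in> PR\<^sup>+" using top_anc[OF x(1)] by auto
  have anc_ax: "anc VF par ?a x" using xa by (auto intro: anc_PR)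
  obtain xs where xs: "xs \<noteq> []" "hd xs = x" "last xs = ?a" "distinct xs"
    "path_edges xs \<subseteq> {e \<in> forest_edges VF par. c e = ?\<alpha>}"
    "\<forall>z \<in> set xs - {x}. (z, ?a) \<in> (Tr ?\<alpha>)\<^sup>* \<and> (z = ?a \<or> m z \<noteq> ?\<alpha>)"
    using uplist[OF x(1)] by blast
  show ?thesis
  proof (cases "m ?a = ?\<alpha>")
    case True
    then have pa: "partner x = ?a" unfolding partner_def by simp
    have "dfs ?a < dfs x" using dfs_anc[OF aV xV anc_ax ane] .
    moreover have "same_tree VF par x ?a" unfolding same_tree_def
      using aV anc_ax by (auto simp: anc_def)
    ultimately have "forest_less VF par dfs x ?a" unfolding forest_less_def forest_le_def
      using aV xV ane by auto
    moreover have "forest_path VF par xs x ?a" using xs(1-5) unfolding fpath by blast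
    moreover have "\<forall>z\<in>path_internal xs. m z \<noteq> m x \<and> (z, topx x) \<in> (Tr (col x))\<^sup>* \<and>
        (\<exists>e\<in>forest_edges VF par. z \<in> e \<and> c e = m x)"
    proof
      fix z assume z: "z \<in> path_internal xs"
      then have "z \<in> set xs - {x}" "z \<noteq> ?a" using xs(2,3) unfolding path_internal_def by auto
      then have h: "(z, ?a) \<in> (Tr ?\<alpha>)\<^sup>* \<and> (z = ?a \<or> m z \<noteq> ?\<alpha>)" using xs(6) by blast
      then have "m z \<noteq> ?\<alpha>" using \<open>z \<noteq> ?a\<close> by blast
      then have "m z \<noteq> m x \<and> (z, topx x) \<in> (Tr (col x))\<^sup>*" using h mx by simp
      moreover obtain e where "e \<in> path_edges xs" "z \<in> e" using path_internal_edge[OF z] by blast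
      then have "e \<in> forest_edges VF par" "c e = m x" using xs(5) mx by auto
      ultimately show "m z \<noteq> m x \<and> (z, topx x) \<in> (Tr (col x))\<^sup>* \<and>
        (\<exists>e\<in>forest_edges VF par. z \<in> e \<and> c e = m x)" using \<open>z \<in> e\<close> by blast
    qed
    moreover have "\<forall>e\<in>path_edges xs. c e = m x" using xs(5) mx by auto
    moreover have "m ?a = m x" using True mx by simp
    ultimately show ?thesis unfolding pa by blast
  next
    case False
    let ?v = "vmin ?a"
    have pa: "partner x = ?v" using False unfolding partner_def by simp
    have xg: "x \<in> grp ?a" using x False unfolding grp_def by auto
    have vg: "?v \<in> grp ?a" and dv: "dfs ?v \<le> dfs x" using vmin_props[OF xg] by auto
    have v: "?v \<in> T0" "topx ?v = ?a" using vg unfolding grp_def by auto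
    have cv: "col ?v = ?\<alpha>" using grp_col[OF vg xg] .
    have vV: "?v \<in> VF" and mv: "m ?v = col ?v" using v(1) unfolding T0_def by auto
    have vx: "?v \<noteq> x" using x(2) pa by simp
    have anc_av: "anc VF par ?a ?v" using top_anc(1)[OF v(1)] v(2) by (auto intro: anc_PR)
    obtain ys where ys: "ys \<noteq> []" "hd ys = ?v" "last ys = ?a" "distinct ys"
      "path_edges ys \<subseteq> {e \<in> forest_edges VF par. c e = ?\<alpha>}"
      "\<forall>z \<in> set ys - {?v}. (z, ?a) \<in> (Tr ?\<alpha>)\<^sup>* \<and> (z = ?a \<or> m z \<noteq> ?\<alpha>)"
      using uplist[OF v(1)] v(2) cv by auto
    obtain zs where zs: "zs \<noteq> []" "hd zs = x" "last zs = ?v" "distinct zs"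
      "set zs \<subseteq> set xs \<union> set ys" "path_edges zs \<subseteq> path_edges xs \<union> path_edges ys"
      using combine_paths[OF xs(1,4) ys(1,4)] xs(2,3) ys(2,3) by auto
    have pe: "path_edges zs \<subseteq> {e \<in> forest_edges VF par. c e = ?\<alpha>}" using zs(6) xs(5) ys(5) by blast
    have "same_tree VF par x ?v" unfolding same_tree_def using aV anc_ax anc_av by blast
    moreover have "dfs ?v \<noteq> dfs x" using dfs_inj[OF xV vV \<open>same_tree VF par x ?v\<close>] vx by metis
    ultimately have "forest_less VF par dfs x ?v" unfolding forest_less_def forest_le_def
      using vV xV vx dv by auto
    moreover have "forest_path VF par zs x ?v" using zs(1-4) pe unfolding fpath by blast
    moreover have "\<forall>z\<in>path_internal zs. m z \<noteq> m x \<and> (z, topx x) \<in> (Tr (col x))\<^sup>* \<and>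
        (\<exists>e\<in>forest_edges VF par. z \<in> e \<and> c e = m x)"
    proof
      fix z assume z: "z \<in> path_internal zs"
      then have "z \<in> (set xs - {x}) \<union> (set ys - {?v})" using zs(2,3,5) unfolding path_internal_def by auto
      then have "(z, ?a) \<in> (Tr ?\<alpha>)\<^sup>* \<and> (z = ?a \<or> m z \<noteq> ?\<alpha>)" using xs(6) ys(6) by blast
      then have "m z \<noteq> ?\<alpha> \<and> (z, topx x) \<in> (Tr (col x))\<^sup>*" using False by metis
      then have "m z \<noteq> m x \<and> (z, topx x) \<in> (Tr (col x))\<^sup>*" using mx by simp
      moreover obtain e where "e \<in> path_edges zs" "z \<in> e" using path_internal_edge[OF z] by blast
      then have "e \<in> forest_edges VF par" "c e = m x" using pe mx by auto
      ultimately show "m z \<noteq> m x \<and> (z, topx x) \<in> (Tr (col x))\<^sup>* \<and>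
        (\<exists>e\<in>forest_edges VF par. z \<in> e \<and> c e = m x)" using \<open>z \<in> e\<close> by blast
    qed
    moreover have "\<forall>e\<in>path_edges zs. c e = m x" using pe mx by auto
    moreover have "m ?v = m x" using mv cv mx by simp
    ultimately show ?thesis unfolding pa by blast
  qed
qed

definition P where
  "P x xs \<longleftrightarrow> forest_less VF par dfs x (partner x) \<and> m (partner x) = m x \<and>
    forest_path VF par xs x (partner x) \<and> (\<forall>e\<in>path_edges xs. c e = m x) \<and>
    (\<forall>z\<in>path_internal xs. m z \<noteq> m x \<and> (z, topx x) \<in> (Tr (col x))\<^sup>* \<and>
        (\<exists>e\<in>forest_edges VF par. z \<in> e \<and> c e = m x))"

lemma P_some: "x \<in> U \<Longrightarrow> P x (SOME xs. P x xs)"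
  using K6[of x] unfolding P_def[symmetric] by (rule someI_ex)

lemma P_int: assumes "P x xs" "z \<in> path_internal xs"
  shows "m z \<noteq> m x" "(z, topx x) \<in> (Tr (col x))\<^sup>*" "\<exists>e\<in>forest_edges VF par. z \<in> e \<and> c e = m x"
proof -
  have "\<forall>z\<in>path_internal xs. m z \<noteq> m x \<and> (z, topx x) \<in> (Tr (col x))\<^sup>* \<and>
        (\<exists>e\<in>forest_edges VF par. z \<in> e \<and> c e = m x)"
    using assms(1) unfolding P_def by (elim conjE)
  then show "m z \<noteq> m x" "(z, topx x) \<in> (Tr (col x))\<^sup>*" "\<exists>e\<in>forest_edges VF par. z \<in> e \<and> c e = m x"
    using assms(2) by auto
qed

lemma P_VF: assumes "P x xs" shows "partner x \<in> VF"
proof -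
  have "forest_less VF par dfs x (partner x)" using assms unfolding P_def by (elim conjE)
  then show ?thesis unfolding forest_less_def forest_le_def by (elim conjE)
qed

lemma ex1_two: "\<exists>!e. Q e \<Longrightarrow> Q a \<Longrightarrow> Q b \<Longrightarrow> a = b" by blast

lemma M_partner:
  assumes x: "x \<in> U" and y: "y \<in> U" and Px: "P x xs" and Py: "P y ys"
    and z: "z \<in> path_internal xs" "z \<in> path_internal ys"
    and Mx: "{x, partner x} \<in> M" and My: "{y, partner y} \<in> M"
  shows "x = y"
proof -
  obtain e1 where e1: "e1 \<in> forest_edges VF par" "z \<in> e1" "c e1 = m x"
    using P_int(3)[OF Px z(1)] by blast
  have zx: "m z \<noteq> m x" "(z, topx x) \<in> (Tr (col x))\<^sup>*" using P_int(1,2)[OF Px z(1)] by auto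
  obtain e2 where e2: "e2 \<in> forest_edges VF par" "z \<in> e2" "c e2 = m y"
    using P_int(3)[OF Py z(2)] by blast
  have zy: "m z \<noteq> m y" "(z, topx y) \<in> (Tr (col y))\<^sup>*" using P_int(1,2)[OF Py z(2)] by auto
  have zV: "z \<in> V" using E_V[OF FE_E[OF e1(1)] e1(2)] .
  have "c e1 = c e2" using colour3[OF zV FE_E[OF e1(1)] FE_E[OF e2(1)] e1(2) e2(2)] e1(3) e2(3) zx(1) zy(1)
    by simp
  then have mxy: "m x = m y" using e1 e2 by simp
  have xT: "x \<in> T0" and yT: "y \<in> T0" using x y unfolding U_def by auto
  have cxy: "col x = col y" using xT yT mxy unfolding T0_def by auto
  have "topx x = topx y"
  proof (rule functional_end_unique[of "Tr (col x)" z "topx x" "topx y"])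
    show "\<And>a b d. (a, b) \<in> Tr (col x) \<Longrightarrow> (a, d) \<in> Tr (col x) \<Longrightarrow> b = d" by (rule Tr_fun)
    show "(z, topx x) \<in> (Tr (col x))\<^sup>*" by (rule zx(2))
    show "(z, topx y) \<in> (Tr (col x))\<^sup>*" using zy(2) cxy by simp
    show "topx x \<notin> Domain (Tr (col x))" by (rule top_props(2)[OF xT])
    show "topx y \<notin> Domain (Tr (col x))" using top_props(2)[OF yT] cxy by simp
  qed
  then have pxy: "partner x = partner y" unfolding partner_def using cxy by simp
  have "partner x \<in> VF" using P_VF[OF Px] .
  then have wV: "partner x \<in> V" using FV by blast
  then have "\<exists>!e. e \<in> M \<and> partner x \<in> e" using PM unfolding perfect_matching_def by blast
  then have "{x, partner x} = {y, partner x}"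
    by (rule ex1_two[where Q = "\<lambda>e. e \<in> M \<and> partner x \<in> e"]) (use Mx My pxy in auto)
  then show "x = y" by (metis doubleton_eq_iff)
qed

lemma main:
  "\<exists>(u :: nat \<Rightarrow> 'a) (v :: nat \<Rightarrow> 'a) (p :: nat \<Rightarrow> 'a list).
     let n = card (leaves VF par) in
       (\<forall>i<n. \<forall>j<n. i \<noteq> j \<longrightarrow> u i \<noteq> u j) \<and>
       (\<forall>i<n. forest_less VF par dfs (u i) (v i) \<and> forest_path VF par (p i) (u i) (v i)) \<and>
       (\<forall>i<n. mcl M c (u i) = mcl M c (v i)) \<and>
       (\<forall>i<n. \<forall>e \<in> path_edges (p i). c e = mcl M c (u i)) \<and>
       (\<forall>i<n. \<forall>z \<in> path_internal (p i). mcl M c z \<noteq> mcl M c (u i)) \<and>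
       (\<forall>i<n. \<forall>j<n. i \<noteq> j \<and> {u i, v i} \<in> M \<and> {u j, v j} \<in> M \<longrightarrow>
            path_internal (p i) \<inter> path_internal (p j) = {})"
proof -
  obtain g where g: "bij_betw g {0..<card U} U" using ex_bij_betw_nat_finite[OF U_fin] by blast
  define n where "n = card (leaves VF par)"
  have gU: "g i \<in> U" if "i < n" for i
  proof -
    have "i \<in> {0..<card U}" using that card_leaves unfolding n_def by simp
    then show ?thesis by (rule bij_betw_apply[OF g])
  qed
  have ginj: "g i \<noteq> g j" if "i < n" "j < n" "i \<noteq> j" for i j
  proof -
    have "i \<in> {0..<card U}" "j \<in> {0..<card U}" using that card_leaves unfolding n_def by auto
    then show ?thesis using bij_betw_imp_inj_on[OF g] that(3) by (meson inj_on_contraD)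
  qed
  define u where "u = g"
  define v where "v i = partner (g i)" for i
  define p where "p i = (SOME xs. P (g i) xs)" for i
  have Pi: "P (g i) (p i)" if "i < n" for i using P_some[OF gU[OF that]] unfolding p_def .
  have A: "\<forall>i<n. \<forall>j<n. i \<noteq> j \<longrightarrow> u i \<noteq> u j" using ginj unfolding u_def by blast
  have Pu: "forest_less VF par dfs (u i) (v i) \<and> mcl M c (u i) = mcl M c (v i) \<and>
    forest_path VF par (p i) (u i) (v i) \<and> (\<forall>e\<in>path_edges (p i). c e = mcl M c (u i)) \<and>
    (\<forall>z\<in>path_internal (p i). mcl M c z \<noteq> mcl M c (u i))" if "i < n" for i
    using Pi[OF that] unfolding P_def u_def v_def by auto
  have B: "\<forall>i<n. forest_less VF par dfs (u i) (v i) \<and> forest_path VF par (p i) (u i) (v i)"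
    using Pu by blast
  have C: "\<forall>i<n. mcl M c (u i) = mcl M c (v i)"
    using Pu by blast
  have D': "\<forall>i<n. \<forall>e \<in> path_edges (p i). c e = mcl M c (u i)"
    using Pu by blast
  have E': "\<forall>i<n. \<forall>z \<in> path_internal (p i). mcl M c z \<noteq> mcl M c (u i)"
    using Pu by blast
  have F': "\<forall>i<n. \<forall>j<n. i \<noteq> j \<and> {u i, v i} \<in> M \<and> {u j, v j} \<in> M \<longrightarrow>
            path_internal (p i) \<inter> path_internal (p j) = {}"
  proof (intro allI impI)
    fix i j assume ij: "i < n" "j < n" "i \<noteq> j \<and> {u i, v i} \<in> M \<and> {u j, v j} \<in> M"
    show "path_internal (p i) \<inter> path_internal (p j) = {}"
    proof (rule ccontr)
      assume "path_internal (p i) \<inter> path_internal (p j) \<noteq> {}"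
      then obtain z where z: "z \<in> path_internal (p i)" "z \<in> path_internal (p j)" by blast
      have "g i = g j"
        using M_partner[OF gU[OF ij(1)] gU[OF ij(2)] Pi[OF ij(1)] Pi[OF ij(2)] z] ij(3)
        unfolding u_def v_def by blast
      then show False using ginj ij by blast
    qed
  qed
  show ?thesis unfolding Let_def n_def[symmetric]
    by (rule exI[of _ u], rule exI[of _ v], rule exI[of _ p]) (intro conjI A B C D' E' F')
qed

end

theorem lemma3:
  fixes V :: "'a set" and E M :: "'a set set" and c :: "'a set \<Rightarrow> nat"
    and VF :: "'a set" and par :: "'a \<Rightarrow> 'a option" and dfs :: "'a \<Rightarrow> nat"
  assumes G: "simple_graph V E"
    and PM: "perfect_matching V E M"
    and C: "optimal_edge_2_colouring V E c"
    and F: "rooted_forest VF par"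
    and F_sub: "VF \<subseteq> V" "forest_edges VF par \<subseteq> E - M"
    and D: "dfs_indexing VF par dfs"
    and RL: "\<forall>u \<in> roots VF par \<union> leaves VF par. \<forall>e \<in> forest_edges VF par.
               u \<in> e \<longrightarrow> c e = mcl M c u"
  shows "\<exists>(u :: nat \<Rightarrow> 'a) (v :: nat \<Rightarrow> 'a) (p :: nat \<Rightarrow> 'a list).
     let n = card (leaves VF par) in
       (\<forall>i<n. \<forall>j<n. i \<noteq> j \<longrightarrow> u i \<noteq> u j) \<and>
       (\<forall>i<n. forest_less VF par dfs (u i) (v i) \<and> forest_path VF par (p i) (u i) (v i)) \<and>
       (\<forall>i<n. mcl M c (u i) = mcl M c (v i)) \<and>
       (\<forall>i<n. \<forall>e \<in> path_edges (p i). c e = mcl M c (u i)) \<and>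
       (\<forall>i<n. \<forall>z \<in> path_internal (p i). mcl M c z \<noteq> mcl M c (u i)) \<and>
       (\<forall>i<n. \<forall>j<n. i \<noteq> j \<and> {u i, v i} \<in> M \<and> {u j, v j} \<in> M \<longrightarrow>
            path_internal (p i) \<inter> path_internal (p j) = {})"
proof -
  have C2: "edge_2_colouring V E c" using C unfolding optimal_edge_2_colouring_def by blast
  interpret L3 V E M c VF par dfs
    using G PM C2 F F_sub D RL by unfold_locales
  show ?thesis by (rule main)
qed

end
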